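(* Let $D$ be a locatable digraph of order $n$, and let $D'$ be the spanning subdigraph of $D$ whose arcs are exactly the forcing arcs of $D$. Then $\gamma_{OL}(D)=n$ if and only if $D'$ is a disjoint union of directed cycles covering all vertices of $D$ (i.e. every vertex of $D$ lies on exactly one of these cycles, and the arcs of $D'$ are exactly the arcs of these cycles).
   Context: Digraphs are finite and may contain loops; between two distinct vertices there may be arcs in one or both directions, no repeated arcs. A directed cycle may have length 1 (a loop) or 2 (arcs $uv$ and $vu$). $N^-(v)=\{u: uv\text{ is an arc}\}$ (contains $v$ iff $v$ has a loop). An OLD set of $D$ is a set $S\subseteq V(D)$ such that every vertex has an in-neighbour in $S$ and for every two distinct vertices $u,w$ some vertex of $S$ lies in exactly one of $N^-(u),N^-(w)$. $D$ is locatable if it has an OLD set, and then $\gamma_{OL}(D)$ is the minimum size of an OLD set. An arc $xy$ (possibly a loop) of $D$ is a forcing arc if either $N^-(y)=\{x\}$, or there is a vertex $z$ with $N^-(z)=N^-(y)\setminus\{x\}$. *)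

theory Defs
  imports Main
begin

definition digraph :: "'a set \<Rightarrow> ('a \<times> 'a) set \<Rightarrow> bool" where
  "digraph V A \<longleftrightarrow> finite V \<and> A \<subseteq> V \<times> V"

definition in_nbhd :: "'a set \<Rightarrow> ('a \<times> 'a) set \<Rightarrow> 'a \<Rightarrow> 'a set" where
  "in_nbhd V A v = {u \<in> V. (u, v) \<in> A}"

definition is_OLD :: "'a set \<Rightarrow> ('a \<times> 'a) set \<Rightarrow> 'a set \<Rightarrow> bool" where
  "is_OLD V A S \<longleftrightarrow> S \<subseteq> V
     \<and> (\<forall>v\<in>V. in_nbhd V A v \<inter> S \<noteq> {})
     \<and> (\<forall>u\<in>V. \<forall>w\<in>V. u \<noteq> w \<longrightarrow>
          (\<exists>s\<in>S. (s \<in> in_nbhd V A u) \<noteq> (s \<in> in_nbhd V A w)))"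

definition locatable :: "'a set \<Rightarrow> ('a \<times> 'a) set \<Rightarrow> bool" where
  "locatable V A \<longleftrightarrow> (\<exists>S. is_OLD V A S)"

definition gamma_OL :: "'a set \<Rightarrow> ('a \<times> 'a) set \<Rightarrow> nat" where
  "gamma_OL V A = (LEAST k. \<exists>S. is_OLD V A S \<and> card S = k)"

definition forcing_arc :: "'a set \<Rightarrow> ('a \<times> 'a) set \<Rightarrow> 'a \<Rightarrow> 'a \<Rightarrow> bool" where
  "forcing_arc V A x y \<longleftrightarrow> (x, y) \<in> A \<and>
     (in_nbhd V A y = {x} \<or> (\<exists>z\<in>V. in_nbhd V A z = in_nbhd V A y - {x}))"

definition forcing_arcs :: "'a set \<Rightarrow> ('a \<times> 'a) set \<Rightarrow> ('a \<times> 'a) set" where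
  "forcing_arcs V A = {(x, y). forcing_arc V A x y}"

text \<open>A directed cycle is given by a nonempty list of distinct vertices
  [c0, ..., c(k-1)]; its arcs are c_i c_(i+1 mod k). Length 1 gives a loop,
  length 2 gives a pair of opposite arcs.\<close>

definition dcycle :: "'a list \<Rightarrow> bool" where
  "dcycle cs \<longleftrightarrow> cs \<noteq> [] \<and> distinct cs"

definition cycle_arcs :: "'a list \<Rightarrow> ('a \<times> 'a) set" where
  "cycle_arcs cs = {(cs ! i, cs ! ((i + 1) mod length cs)) | i. i < length cs}"

definition disjoint_cycle_cover :: "'a set \<Rightarrow> ('a \<times> 'a) set \<Rightarrow> bool" where
  "disjoint_cycle_cover V F \<longleftrightarrow>
     (\<exists>C. (\<forall>c\<in>C. dcycle c)
        \<and> (\<forall>v\<in>V. \<exists>!c. c \<in> C \<and> v \<in> set c)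
        \<and> (\<Union>c\<in>C. set c) = V
        \<and> F = (\<Union>c\<in>C. cycle_arcs c))"

end

theory Submission
  imports Defs "HOL-Combinatorics.Orbits" "HOL-Combinatorics.Permutations"
begin

lemma card4: "a\<noteq>b \<Longrightarrow> a\<noteq>c \<Longrightarrow> a\<noteq>d \<Longrightarrow> b\<noteq>c \<Longrightarrow> b\<noteq>d \<Longrightarrow> c\<noteq>d \<Longrightarrow> card {a,b,c,d} = 4"
  by simp

lemma fam_key:
  assumes "finite X" "F \<subseteq> Pow X" "{} \<in> F" "card F \<le> card X + 1"
    "\<forall>x\<in>X. \<exists>P\<in>F. x \<notin> P \<and> insert x P \<in> F"
    "Q \<in> F" "x1 \<in> Q" "x2 \<in> Q" "x1 \<noteq> x2" "Q - {x1} \<in> F" "Q - {x2} \<in> F"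
  shows False
  using assms
proof (induction "card X" arbitrary: X F Q rule: less_induct)
  case less
  have finF: "finite F" using less.prems(1,2) by (meson finite_Pow_iff rev_finite_subset)
  show False
  proof (cases "X \<subseteq> {x1, x2}")
    case True
    have "{{}, Q, Q - {x1}, Q - {x2}} \<subseteq> F" using less.prems by auto
    hence "card {{}, Q, Q - {x1}, Q - {x2}} \<le> card F" using finF by (intro card_mono) auto
    moreover have "card {{}, Q, Q - {x1}, Q - {x2}} = 4"
    proof -
      have "{} \<noteq> Q" "{} \<noteq> Q - {x1}" "{} \<noteq> Q - {x2}" "Q \<noteq> Q - {x1}" "Q \<noteq> Q - {x2}"
        "Q - {x1} \<noteq> Q - {x2}" using less.prems(7-9) by blast+
      thus ?thesis by (rule card4)
    qed
    moreover have "X = {x1, x2}" using True less.prems(2,6-8) by auto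
    ultimately show False using less.prems(4,9) by simp
  next
    case False
    then obtain x where x: "x \<in> X" "x \<noteq> x1" "x \<noteq> x2" by auto
    define G where "G = (\<lambda>S. S - {x}) ` F"
    obtain P where P: "P \<in> F" "x \<notin> P" "insert x P \<in> F" using less.prems(5) x by blast
    have "\<not> inj_on (\<lambda>S. S - {x}) F"
    proof
      assume "inj_on (\<lambda>S. S - {x}) F"
      moreover have "P - {x} = insert x P - {x}" using P(2) by auto
      ultimately have "P = insert x P" using P(1,3) unfolding inj_on_def by blast
      thus False using P(2) by auto
    qed
    hence "card G \<noteq> card F" unfolding G_def using inj_on_iff_eq_card finF by blast
    moreover have "card G \<le> card F" unfolding G_def using finF card_image_le by blast
    ultimately have cG: "card G \<le> card (X - {x}) + 1" using less.prems(4) x(1) less.prems(1)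
      by (simp add: card_Diff_singleton)
    show False
    proof (rule less.hyps[of "X - {x}" G "Q - {x}"])
      show "card (X - {x}) < card X" using x(1) less.prems(1) by (meson card_Diff1_less)
      show "finite (X - {x})" using less.prems(1) by simp
      show "G \<subseteq> Pow (X - {x})" unfolding G_def using less.prems(2) by auto
      show "{} \<in> G" unfolding G_def using less.prems(3) by force
      show "card G \<le> card (X - {x}) + 1" by (rule cG)
      show "\<forall>y\<in>X - {x}. \<exists>P\<in>G. y \<notin> P \<and> insert y P \<in> G"
      proof
        fix y assume y: "y \<in> X - {x}"
        then obtain P where P: "P \<in> F" "y \<notin> P" "insert y P \<in> F" using less.prems(5) by blast
        have "insert y (P - {x}) = insert y P - {x}" using y by auto
        thus "\<exists>P\<in>G. y \<notin> P \<and> insert y P \<in> G" unfolding G_def using P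
          by (metis DiffD1 image_eqI)
      qed
      show "Q - {x} \<in> G" unfolding G_def using less.prems(6) by blast
      show "x1 \<in> Q - {x}" "x2 \<in> Q - {x}" "x1 \<noteq> x2" using less.prems(7-9) x by auto
      have "Q - {x} - {x1} = (Q - {x1}) - {x}" "Q - {x} - {x2} = (Q - {x2}) - {x}" by auto
      thus "Q - {x} - {x1} \<in> G" "Q - {x} - {x2} \<in> G" unfolding G_def using less.prems(10,11) by auto
    qed
  qed
qed


lemma perm_cover:
  assumes finV: "finite V" and inj: "inj_on f V" and im: "f ` V = V"
  shows "disjoint_cycle_cover V {(x, f x) | x. x \<in> V}"
proof -
  define h where "h = (\<lambda>x. if x \<in> V then f x else x)"
  have "bij_betw h V V" unfolding bij_betw_def h_def using inj im
    by (auto simp: inj_on_def image_def)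
  hence hp: "h permutes V" by (rule bij_imp_permutes) (simp add: h_def)
  have perm: "permutation h" using finV hp by (rule permutes_imp_permutation)
  have self: "u \<in> orbit h u" for u using perm by (rule permutation_self_in_orbit)
  have hV: "(h ^^ n) u \<in> V" if "u \<in> V" for n u
    using that by (induction n) (auto simp: permutes_in_image[OF hp])
  have orbV: "orbit h u \<subseteq> V" if "u \<in> V" for u
    using that hV by (auto simp: orbit_altdef)
  have orb_eq: "orbit h u = orbit h v" if "u \<in> orbit h v" for u v
  proof
    show "orbit h u \<subseteq> orbit h v" using that orbit_trans by fast
    have "v \<in> orbit h u" using orbit_swap[OF self that] .
    thus "orbit h v \<subseteq> orbit h u" using orbit_trans by fast
  qed
  define L where "L u = funpow_dist1 h u u" for u
  define cyc where "cyc u = map (\<lambda>n. (h ^^ n) u) [0..<L u]" for u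
  define rep where "rep v = (SOME u. u \<in> orbit h v)" for v
  have rep_in: "rep v \<in> orbit h v" for v unfolding rep_def using self by (rule someI)
  have set_cyc: "set (cyc u) = orbit h u" for u
    unfolding cyc_def L_def set_map set_upt by (rule orbit_conv_funpow_dist1[OF self, symmetric])
  have dist_cyc: "distinct (cyc u)" for u
    unfolding cyc_def L_def distinct_map
    using inj_on_funpow_dist1[OF self[of u]] by (simp only: distinct_upt set_upt simp_thms)
  have ne_cyc: "cyc u \<noteq> []" for u unfolding cyc_def L_def by simp
  have Lper: "(h ^^ L u) u = u" for u unfolding L_def using funpow_dist1_prop[OF self] .
  have arcs_cyc: "cycle_arcs (cyc u) = {(w, h w) | w. w \<in> orbit h u}" for u
  proof -
    have len: "length (cyc u) = L u" unfolding cyc_def by simp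
    have nth: "cyc u ! i = (h ^^ i) u" if "i < L u" for i unfolding cyc_def using that by simp
    have Lpos: "0 < L u" unfolding L_def by simp
    have nxt: "cyc u ! ((i + 1) mod L u) = h ((h ^^ i) u)" for i
    proof -
      have "cyc u ! ((i + 1) mod L u) = (h ^^ ((i + 1) mod L u)) u" using Lpos by (simp add: nth)
      also have "\<dots> = (h ^^ (i+1)) u" by (rule funpow_mod_eq[OF Lper])
      finally show ?thesis by simp
    qed
    have "cycle_arcs (cyc u) = {((h ^^ i) u, h ((h ^^ i) u)) | i. i < L u}"
    proof -
      have eq: "\<And>i. i < L u \<Longrightarrow> (cyc u ! i, cyc u ! ((i + 1) mod L u)) = ((h ^^ i) u, h ((h ^^ i) u))"
        using nth nxt by simp
      show ?thesis unfolding cycle_arcs_def len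
        by (intro Collect_cong) (metis eq)
    qed
    also have "\<dots> = {(w, h w) | w. w \<in> orbit h u}"
      using orbit_altdef_bounded[OF Lper] Lpos by (auto simp: L_def)
    finally show ?thesis .
  qed
  define C where "C = (\<lambda>v. cyc (rep v)) ` V"
  show ?thesis unfolding disjoint_cycle_cover_def
  proof (intro exI[of _ C] conjI ballI)
    fix c assume "c \<in> C" thus "dcycle c" unfolding C_def dcycle_def using ne_cyc dist_cyc by auto
  next
    fix v assume v: "v \<in> V"
    show "\<exists>!c. c \<in> C \<and> v \<in> set c"
    proof
      show "cyc (rep v) \<in> C \<and> v \<in> set (cyc (rep v))"
        unfolding C_def set_cyc using v orb_eq[OF rep_in] self by auto
    next
      fix c assume c: "c \<in> C \<and> v \<in> set c"
      then obtain w where w: "w \<in> V" "c = cyc (rep w)" unfolding C_def by auto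
      have "v \<in> orbit h w" using c w set_cyc orb_eq[OF rep_in] by auto
      hence "orbit h w = orbit h v" using orb_eq by auto
      hence "rep w = rep v" unfolding rep_def by simp
      thus "c = cyc (rep v)" using w by simp
    qed
  next
    show "(\<Union>c\<in>C. set c) = V"
    proof
      show "(\<Union>c\<in>C. set c) \<subseteq> V" unfolding C_def using orb_eq[OF rep_in] orbV by (auto simp: set_cyc)
      show "V \<subseteq> (\<Union>c\<in>C. set c)" unfolding C_def using orb_eq[OF rep_in] self by (auto simp: set_cyc)
    qed
  next
    have "(\<Union>c\<in>C. cycle_arcs c) = {(w, h w) | w. w \<in> (\<Union>v\<in>V. orbit h v)}"
      unfolding C_def using orb_eq[OF rep_in] by (auto simp: arcs_cyc)
    also have "(\<Union>v\<in>V. orbit h v) = V" using orbV self by auto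
    finally show "{(x, f x) | x. x \<in> V} = (\<Union>c\<in>C. cycle_arcs c)" by (auto simp: h_def)
  qed
qed


lemma old_mono: assumes "is_OLD V A S" "S \<subseteq> T" "T \<subseteq> V" shows "is_OLD V A T"
proof -
  have a: "\<forall>v\<in>V. in_nbhd V A v \<inter> S \<noteq> {}" and
    b: "\<forall>u\<in>V. \<forall>w\<in>V. u \<noteq> w \<longrightarrow> (\<exists>s\<in>S. (s \<in> in_nbhd V A u) \<noteq> (s \<in> in_nbhd V A w))"
    using assms(1) unfolding is_OLD_def by auto
  have "\<forall>v\<in>V. in_nbhd V A v \<inter> T \<noteq> {}" using a assms(2) by blast
  moreover have "\<forall>u\<in>V. \<forall>w\<in>V. u \<noteq> w \<longrightarrow> (\<exists>s\<in>T. (s \<in> in_nbhd V A u) \<noteq> (s \<in> in_nbhd V A w))"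
    using b assms(2) by blast
  ultimately show ?thesis unfolding is_OLD_def using assms(3) by blast
qed

lemma V_old: assumes "locatable V A" shows "is_OLD V A V"
proof -
  obtain S where S: "is_OLD V A S" using assms unfolding locatable_def by blast
  hence "S \<subseteq> V" unfolding is_OLD_def by blast
  thus ?thesis using old_mono[OF S] by blast
qed

lemma gamma_iff:
  assumes dg: "digraph V A" and loc: "locatable V A"
  shows "gamma_OL V A = card V \<longleftrightarrow> (\<forall>x\<in>V. \<not> is_OLD V A (V - {x}))"
proof -
  have finV: "finite V" using dg unfolding digraph_def by simp
  have ex: "\<exists>S. is_OLD V A S \<and> card S = card V" using V_old[OF loc] by blast
  have le: "gamma_OL V A \<le> card V" unfolding gamma_OL_def using ex by (rule Least_le)
  have "\<exists>S. is_OLD V A S \<and> card S = gamma_OL V A" unfolding gamma_OL_def using LeastI_ex[of "\<lambda>k. \<exists>S. is_OLD V A S \<and> card S = k"] ex by blast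
  then obtain S0 where S0: "is_OLD V A S0" "card S0 = gamma_OL V A" by blast
  show ?thesis
  proof
    assume g: "gamma_OL V A = card V"
    show "\<forall>x\<in>V. \<not> is_OLD V A (V - {x})"
    proof (intro ballI notI)
      fix x assume x: "x \<in> V" and o: "is_OLD V A (V - {x})"
      have "gamma_OL V A \<le> card (V - {x})" unfolding gamma_OL_def using o by (intro Least_le) blast
      moreover have "card (V - {x}) < card V" using x finV by (meson card_Diff1_less)
      ultimately show False using g by simp
    qed
  next
    assume all: "\<forall>x\<in>V. \<not> is_OLD V A (V - {x})"
    have "S0 \<subseteq> V" using S0(1) unfolding is_OLD_def by blast
    show "gamma_OL V A = card V"
    proof (rule ccontr)
      assume "gamma_OL V A \<noteq> card V"
      hence "card S0 < card V" using le S0(2) by simp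
      hence "S0 \<noteq> V" by auto
      then obtain x where x: "x \<in> V" "x \<notin> S0" using \<open>S0 \<subseteq> V\<close> by blast
      have "is_OLD V A (V - {x})" by (rule old_mono[OF S0(1)]) (use x \<open>S0 \<subseteq> V\<close> in auto)
      thus False using all x by blast
    qed
  qed
qed

lemma forcing_iff:
  assumes dg: "digraph V A"
  shows "forcing_arc V A x y \<longleftrightarrow> y \<in> V \<and> x \<in> in_nbhd V A y
            \<and> in_nbhd V A y - {x} \<in> insert {} (in_nbhd V A ` V)"
proof -
  have AV: "A \<subseteq> V \<times> V" using dg unfolding digraph_def by simp
  have a: "(x, y) \<in> A \<longleftrightarrow> y \<in> V \<and> x \<in> in_nbhd V A y" unfolding in_nbhd_def using AV by auto
  show ?thesis unfolding forcing_arc_def a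
  proof (intro iffI)
    assume "(y \<in> V \<and> x \<in> in_nbhd V A y) \<and> (in_nbhd V A y = {x} \<or> (\<exists>z\<in>V. in_nbhd V A z = in_nbhd V A y - {x}))"
    thus "y \<in> V \<and> x \<in> in_nbhd V A y \<and> in_nbhd V A y - {x} \<in> insert {} (in_nbhd V A ` V)"
      by (metis Diff_cancel image_eqI insert_iff)
  next
    assume "y \<in> V \<and> x \<in> in_nbhd V A y \<and> in_nbhd V A y - {x} \<in> insert {} (in_nbhd V A ` V)"
    thus "(y \<in> V \<and> x \<in> in_nbhd V A y) \<and> (in_nbhd V A y = {x} \<or> (\<exists>z\<in>V. in_nbhd V A z = in_nbhd V A y - {x}))"
      by (metis Diff_eq_empty_iff imageE insertE subset_singletonD empty_iff)
  qed
qed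

lemma nbhd_props:
  assumes loc: "locatable V A"
  shows "\<And>v. v \<in> V \<Longrightarrow> in_nbhd V A v \<noteq> {}" "inj_on (in_nbhd V A) V" "\<And>v. in_nbhd V A v \<subseteq> V"
proof -
  obtain S where S: "is_OLD V A S" using loc unfolding locatable_def by blast
  show "\<And>v. v \<in> V \<Longrightarrow> in_nbhd V A v \<noteq> {}" using S unfolding is_OLD_def by blast
  show "inj_on (in_nbhd V A) V"
  proof (rule inj_onI)
    fix u w assume uw: "u \<in> V" "w \<in> V" "in_nbhd V A u = in_nbhd V A w"
    show "u = w"
    proof (rule ccontr)
      assume "u \<noteq> w"
      have sep: "\<forall>u\<in>V. \<forall>w\<in>V. u \<noteq> w \<longrightarrow> (\<exists>s\<in>S. (s \<in> in_nbhd V A u) \<noteq> (s \<in> in_nbhd V A w))"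
        using S unfolding is_OLD_def by blast
      then obtain s where "(s \<in> in_nbhd V A u) \<noteq> (s \<in> in_nbhd V A w)" using uw(1,2) \<open>u \<noteq> w\<close> by blast
      thus False using uw(3) by simp
    qed
  qed
  show "\<And>v. in_nbhd V A v \<subseteq> V" unfolding in_nbhd_def by blast
qed

lemma notOLD_iff:
  assumes dg: "digraph V A" and loc: "locatable V A" and x: "x \<in> V"
  shows "\<not> is_OLD V A (V - {x}) \<longleftrightarrow> (\<exists>y. forcing_arc V A x y)"
proof
  note np = nbhd_props[OF loc]
  assume n: "\<not> is_OLD V A (V - {x})"
  have VO: "is_OLD V A V" by (rule V_old[OF loc])
  show "\<exists>y. forcing_arc V A x y"
  proof (cases "\<exists>v\<in>V. in_nbhd V A v \<inter> (V - {x}) = {}")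
    case True
    then obtain v where v: "v \<in> V" "in_nbhd V A v \<inter> (V - {x}) = {}" by blast
    have "in_nbhd V A v = {x}" using v np(1)[OF v(1)] np(3)[of v] by blast
    thus ?thesis unfolding forcing_iff[OF dg] using v(1) by auto
  next
    case False
    then obtain u w where uw: "u \<in> V" "w \<in> V" "u \<noteq> w"
      "\<forall>s\<in>V - {x}. (s \<in> in_nbhd V A u) = (s \<in> in_nbhd V A w)"
    proof -
      have "\<not> (\<forall>u\<in>V. \<forall>w\<in>V. u \<noteq> w \<longrightarrow> (\<exists>s\<in>V - {x}. (s \<in> in_nbhd V A u) \<noteq> (s \<in> in_nbhd V A w)))"
        using n False unfolding is_OLD_def by blast
      thus ?thesis using that by blast
    qed
    have ne: "in_nbhd V A u \<noteq> in_nbhd V A w" using np(2) uw(1-3) unfolding inj_on_def by blast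
    have eq: "in_nbhd V A u - {x} = in_nbhd V A w - {x}" using uw(4) np(3)[of u] np(3)[of w] by blast
    show ?thesis
    proof (cases "x \<in> in_nbhd V A u")
      case True
      have "in_nbhd V A u - {x} = in_nbhd V A w" using eq ne True by blast
      thus ?thesis unfolding forcing_iff[OF dg] using uw(1,2) True by auto
    next
      case False
      hence True': "x \<in> in_nbhd V A w" using eq ne by blast
      have "in_nbhd V A w - {x} = in_nbhd V A u" using eq ne False by blast
      thus ?thesis unfolding forcing_iff[OF dg] using uw(1,2) True' by auto
    qed
  qed
next
  assume "\<exists>y. forcing_arc V A x y"
  then obtain y where y: "forcing_arc V A x y" by blast
  hence yV: "y \<in> V" and xy: "(x, y) \<in> A" using dg unfolding forcing_arc_def digraph_def by auto
  have xN: "x \<in> in_nbhd V A y" using xy dg unfolding in_nbhd_def digraph_def by auto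
  show "\<not> is_OLD V A (V - {x})"
  proof
    assume o: "is_OLD V A (V - {x})"
    from y consider "in_nbhd V A y = {x}" | z where "z \<in> V" "in_nbhd V A z = in_nbhd V A y - {x}"
      unfolding forcing_arc_def by blast
    thus False
    proof cases
      case 1
      hence "in_nbhd V A y \<inter> (V - {x}) = {}" by auto
      moreover have "\<forall>v\<in>V. in_nbhd V A v \<inter> (V - {x}) \<noteq> {}" using o unfolding is_OLD_def by blast
      ultimately show False using yV by blast
    next
      case (2 z)
      have "z \<noteq> y" using 2 xN by blast
      moreover have "\<forall>s\<in>V - {x}. (s \<in> in_nbhd V A y) = (s \<in> in_nbhd V A z)" using 2 by auto
      moreover have sep: "\<forall>u\<in>V. \<forall>w\<in>V. u \<noteq> w \<longrightarrow> (\<exists>s\<in>V - {x}. (s \<in> in_nbhd V A u) \<noteq> (s \<in> in_nbhd V A w))"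
        using o unfolding is_OLD_def by blast
      ultimately show False using yV 2(1) by blast
    qed
  qed
qed


theorem theorem12:
  fixes V :: "'a set" and A :: "('a \<times> 'a) set"
  assumes "digraph V A" and "locatable V A"
  shows "gamma_OL V A = card V \<longleftrightarrow> disjoint_cycle_cover V (forcing_arcs V A)"
proof
  note dg = assms(1) and loc = assms(2)
  note np = nbhd_props[OF loc]
  have finV: "finite V" using dg unfolding digraph_def by simp
  have fV: "x \<in> V \<and> y \<in> V" if "forcing_arc V A x y" for x y
    using that dg unfolding forcing_arc_def digraph_def by auto
  assume "gamma_OL V A = card V"
  hence allF: "\<forall>x\<in>V. \<exists>y. forcing_arc V A x y"
    using gamma_iff[OF dg loc] notOLD_iff[OF dg loc] by blast
  define Fam where "Fam = insert {} (in_nbhd V A ` V)"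
  have "{} \<notin> in_nbhd V A ` V" using np(1) by auto
  hence cFam: "card Fam = card V + 1" unfolding Fam_def using finV np(2)
    by (simp add: card_image)
  have FamP: "Fam \<subseteq> Pow V" unfolding Fam_def using np(3) by auto
  have crit: "\<forall>x\<in>V. \<exists>P\<in>Fam. x \<notin> P \<and> insert x P \<in> Fam"
  proof
    fix x assume "x \<in> V"
    then obtain y where y: "forcing_arc V A x y" using allF by blast
    hence y': "y \<in> V" "x \<in> in_nbhd V A y" "in_nbhd V A y - {x} \<in> Fam"
      unfolding forcing_iff[OF dg] Fam_def by auto
    have "insert x (in_nbhd V A y - {x}) = in_nbhd V A y" using y'(2) by auto
    hence "insert x (in_nbhd V A y - {x}) \<in> Fam" unfolding Fam_def using y'(1) by auto
    thus "\<exists>P\<in>Fam. x \<notin> P \<and> insert x P \<in> Fam" using y'(3) by blast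
  qed
  have inuniq: "x1 = x2" if "forcing_arc V A x1 y" "forcing_arc V A x2 y" for x1 x2 y
  proof (rule ccontr)
    assume ne: "x1 \<noteq> x2"
    have h: "y \<in> V" "x1 \<in> in_nbhd V A y" "in_nbhd V A y - {x1} \<in> Fam"
      "x2 \<in> in_nbhd V A y" "in_nbhd V A y - {x2} \<in> Fam"
      using that unfolding forcing_iff[OF dg] Fam_def by auto
    show False
    proof (rule fam_key[OF finV FamP _ _ crit _ h(2) h(4) ne h(3) h(5)])
      show "{} \<in> Fam" unfolding Fam_def by simp
      show "card Fam \<le> card V + 1" using cFam by simp
      show "in_nbhd V A y \<in> Fam" unfolding Fam_def using h(1) by simp
    qed
  qed
  define f where "f x = (SOME y. forcing_arc V A x y)" for x
  have fF: "forcing_arc V A x (f x)" if "x \<in> V" for x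
    unfolding f_def using allF that by (meson someI_ex)
  have inj: "inj_on f V"
  proof (rule inj_onI)
    fix x1 x2 assume "x1 \<in> V" "x2 \<in> V" "f x1 = f x2"
    thus "x1 = x2" using fF[of x1] fF[of x2] inuniq by metis
  qed
  have sub: "f ` V \<subseteq> V" using fF fV by blast
  have im: "f ` V = V"
    by (rule card_subset_eq[OF finV sub]) (simp add: card_image[OF inj])
  have Fo: "forcing_arcs V A = {(x, f x) | x. x \<in> V}"
  proof (intro set_eqI iffI)
    fix p assume "p \<in> forcing_arcs V A"
    then obtain x y where p: "p = (x, y)" "forcing_arc V A x y" unfolding forcing_arcs_def by blast
    hence "y \<in> V" using fV by blast
    then obtain x' where x': "x' \<in> V" "y = f x'" using im by blast
    hence "x = x'" using inuniq[OF p(2)] fF by blast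
    thus "p \<in> {(x, f x) | x. x \<in> V}" using p x' by blast
  next
    fix p assume "p \<in> {(x, f x) | x. x \<in> V}"
    thus "p \<in> forcing_arcs V A" unfolding forcing_arcs_def using fF by blast
  qed
  show "disjoint_cycle_cover V (forcing_arcs V A)" unfolding Fo by (rule perm_cover[OF finV inj im])
next
  note dg = assms(1) and loc = assms(2)
  assume "disjoint_cycle_cover V (forcing_arcs V A)"
  then obtain C where C: "\<forall>v\<in>V. \<exists>!c. c \<in> C \<and> v \<in> set c"
    "forcing_arcs V A = (\<Union>c\<in>C. cycle_arcs c)" unfolding disjoint_cycle_cover_def by blast
  have "\<forall>x\<in>V. \<exists>y. forcing_arc V A x y"
  proof
    fix x assume "x \<in> V"
    then obtain c where c: "c \<in> C" "x \<in> set c" using C(1) by blast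
    then obtain i where i: "i < length c" "c ! i = x" by (meson in_set_conv_nth)
    hence "(x, c ! ((i + 1) mod length c)) \<in> cycle_arcs c" unfolding cycle_arcs_def by blast
    hence "(x, c ! ((i + 1) mod length c)) \<in> forcing_arcs V A" using C(2) c(1) by blast
    thus "\<exists>y. forcing_arc V A x y" unfolding forcing_arcs_def by blast
  qed
  thus "gamma_OL V A = card V"
    using gamma_iff[OF dg loc] notOLD_iff[OF dg loc] by blast
qed

end
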